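(* Let $p(\cdot)\in\mathcal{P}(\mathbb{R}^n)$, $1\le q,\alpha\le\infty$, with $p(x)\le\alpha\le q$ for all $x$. Then $(L^{p(\cdot)'},\ell^{q'})(\mathbb{R}^n)$ is a dense subspace of $\mathcal{H}(p(\cdot)',q',\alpha')$.
   Context: $\mathcal{P}(\mathbb{R}^n)$: measurable $p(\cdot):\mathbb{R}^n\to[1,\infty)$ with $\operatorname{ess\,inf}p>1$, $\operatorname{ess\,sup}p<\infty$; $p'(x)=p(x)/(p(x)-1)$, and $q',\alpha'$ are conjugate exponents. $\|\cdot\|_{L^{p(\cdot)}}$ is the Luxemburg norm. For $Q_{1,k}=k+[0,1)^n$, $k\in\mathbb{Z}^n$, $(L^{p(\cdot)'},\ell^{q'})(\mathbb{R}^n)$ is the set of $f\in L^{p(\cdot)'}_{loc}$ with $\|f\|_{p(\cdot)',q'}=\big\|\{\|f\chi_{Q_{1,k}}\|_{L^{p(\cdot)'}}\}_{k}\big\|_{\ell^{q'}}<\infty$. Dilation: $St^{(\alpha')}_r f=r^{-n/\alpha'}f(r^{-1}\cdot)$. The space $\mathcal{H}(p(\cdot)',q',\alpha')$ is the set of $f\in L^{p(\cdot)}_{loc}(\mathbb{R}^n)$ for which there is a sequence $\{(c_j,r_j,f_j)\}_{j\ge1}\subset\mathbb{C}\times(0,\infty)\times(L^{p(\cdot)'},\ell^{q'})(\mathbb{R}^n)$ with $f=\sum_{j\ge1}c_jSt^{(\alpha')}_{r_j}(f_j)$ in the sense of $L^{p(\cdot)}_{loc}(\mathbb{R}^n)$,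 $\|f_j\|_{p(\cdot)',q'}\le1$, and $\sum_j|c_j|<\infty$; it is normed by $\|f\|_{\mathcal{H}(p(\cdot)',q',\alpha')}=\inf\sum_j|c_j|$ over all such decompositions. *)

theory Defs
  imports "HOL-Analysis.Analysis"
begin

definition var_exp_class :: "(real^'n::finite \<Rightarrow> real) \<Rightarrow> bool" where
  "var_exp_class p \<longleftrightarrow> p \<in> borel_measurable lebesgue \<and> (\<forall>x. 1 \<le> p x) \<and>
     (\<exists>c>1. AE x in lebesgue. c \<le> p x) \<and> (\<exists>C. AE x in lebesgue. p x \<le> C)"

definition conj_exp :: "('a \<Rightarrow> real) \<Rightarrow> 'a \<Rightarrow> real" where
  "conj_exp p = (\<lambda>x. p x / (p x - 1))"

definition econj :: "ereal \<Rightarrow> ereal" where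
  "econj q = (if q = 1 then \<infinity> else if q = \<infinity> then 1
              else ereal (real_of_ereal q / (real_of_ereal q - 1)))"

definition modular :: "(real^'n::finite \<Rightarrow> real) \<Rightarrow> (real^'n \<Rightarrow> complex) \<Rightarrow> ennreal" where
  "modular p f = (\<integral>\<^sup>+ x. ennreal (norm (f x) powr p x) \<partial>lebesgue)"

definition Lp_mem :: "(real^'n::finite \<Rightarrow> real) \<Rightarrow> (real^'n \<Rightarrow> complex) \<Rightarrow> bool" where
  "Lp_mem p f \<longleftrightarrow> f \<in> borel_measurable lebesgue \<and>
     (\<exists>t>0. modular p (\<lambda>x. f x / of_real t) \<le> 1)"

definition Lp_norm :: "(real^'n::finite \<Rightarrow> real) \<Rightarrow> (real^'n \<Rightarrow> complex) \<Rightarrow> real" where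
  "Lp_norm p f = Inf {t::real. 0 < t \<and> modular p (\<lambda>x. f x / of_real t) \<le> 1}"

definition Lp_loc :: "(real^'n::finite \<Rightarrow> real) \<Rightarrow> (real^'n \<Rightarrow> complex) \<Rightarrow> bool" where
  "Lp_loc p f \<longleftrightarrow> (\<forall>K. compact K \<longrightarrow> Lp_mem p (\<lambda>x. indicator K x * f x))"

definition Lp_loc_conv :: "(real^'n::finite \<Rightarrow> real) \<Rightarrow> (real^'n \<Rightarrow> complex) \<Rightarrow>
     (nat \<Rightarrow> real^'n \<Rightarrow> complex) \<Rightarrow> bool" where
  "Lp_loc_conv p f S \<longleftrightarrow> (\<forall>K. compact K \<longrightarrow>
     (\<forall>N. Lp_mem p (\<lambda>x. indicator K x * (f x - S N x))) \<and>
     (\<lambda>N. Lp_norm p (\<lambda>x. indicator K x * (f x - S N x))) \<longlonglongrightarrow> 0)"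

definition Zn :: "(real^'n::finite) set" where
  "Zn = {k. \<forall>i. k $ i \<in> \<int>}"

definition cube :: "real^'n::finite \<Rightarrow> (real^'n) set" where
  "cube k = {x. \<forall>i. k $ i \<le> x $ i \<and> x $ i < k $ i + 1}"

definition lr_mem :: "ereal \<Rightarrow> ('k \<Rightarrow> real) \<Rightarrow> 'k set \<Rightarrow> bool" where
  "lr_mem r a I = (if r = \<infinity> then bdd_above (a ` I)
                   else (\<lambda>k. a k powr real_of_ereal r) summable_on I)"

definition lr_norm :: "ereal \<Rightarrow> ('k \<Rightarrow> real) \<Rightarrow> 'k set \<Rightarrow> real" where
  "lr_norm r a I = (if r = \<infinity> then (SUP k\<in>I. a k)
                   else (infsum (\<lambda>k. a k powr real_of_ereal r) I) powr (1 / real_of_ereal r))"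

definition amalgam_mem :: "(real^'n::finite \<Rightarrow> real) \<Rightarrow> ereal \<Rightarrow> (real^'n \<Rightarrow> complex) \<Rightarrow> bool" where
  "amalgam_mem p q f \<longleftrightarrow> Lp_loc p f \<and>
     (\<forall>k\<in>Zn. Lp_mem p (\<lambda>x. indicator (cube k) x * f x)) \<and>
     lr_mem q (\<lambda>k. Lp_norm p (\<lambda>x. indicator (cube k) x * f x)) Zn"

definition amalgam_norm :: "(real^'n::finite \<Rightarrow> real) \<Rightarrow> ereal \<Rightarrow> (real^'n \<Rightarrow> complex) \<Rightarrow> real" where
  "amalgam_norm p q f = lr_norm q (\<lambda>k. Lp_norm p (\<lambda>x. indicator (cube k) x * f x)) Zn"

definition dilate :: "ereal \<Rightarrow> real \<Rightarrow> (real^'n::finite \<Rightarrow> complex) \<Rightarrow> real^'n \<Rightarrow> complex" where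
  "dilate a r f = (\<lambda>x. of_real (r powr (- (if a = \<infinity> then 0
        else real CARD('n) / real_of_ereal a))) * f ((1 / r) *\<^sub>R x))"

definition is_decomp :: "(real^'n::finite \<Rightarrow> real) \<Rightarrow> ereal \<Rightarrow> ereal \<Rightarrow> (real^'n \<Rightarrow> complex) \<Rightarrow>
    (nat \<Rightarrow> complex) \<Rightarrow> (nat \<Rightarrow> real) \<Rightarrow> (nat \<Rightarrow> real^'n \<Rightarrow> complex) \<Rightarrow> bool" where
  "is_decomp p q a f c r g \<longleftrightarrow>
     (\<forall>j. 0 < r j \<and> amalgam_mem p q (g j) \<and> amalgam_norm p q (g j) \<le> 1) \<and>
     summable (\<lambda>j. norm (c j)) \<and>
     Lp_loc_conv p f (\<lambda>N x. \<Sum>j<N. c j * dilate a (r j) (g j) x)"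

text \<open>H(p,q,a) (used with p = p', q = q', a = alpha'); local integrability and convergence
  are taken with respect to the exponent p of the building blocks.\<close>
definition Hsp :: "(real^'n::finite \<Rightarrow> real) \<Rightarrow> ereal \<Rightarrow> ereal \<Rightarrow> (real^'n \<Rightarrow> complex) set" where
  "Hsp p q a = {f. Lp_loc p f \<and> (\<exists>c r g. is_decomp p q a f c r g)}"

definition Hnorm :: "(real^'n::finite \<Rightarrow> real) \<Rightarrow> ereal \<Rightarrow> ereal \<Rightarrow> (real^'n \<Rightarrow> complex) \<Rightarrow> real" where
  "Hnorm p q a f = Inf {(\<Sum>j. norm (c j)) | c r g. is_decomp p q a f c r g}"

end

theory Submission
  imports Defs
begin


lemma Lp_zero: "Lp_mem P (\<lambda>x. 0)" "Lp_norm P (\<lambda>x. 0) = 0"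
proof -
  have m: "modular P (\<lambda>x. 0 / of_real t) = 0" for t
    by (simp add: modular_def)
  show "Lp_mem P (\<lambda>x. 0)" unfolding Lp_mem_def using m[of 1] by (auto intro!: exI[of _ 1])
  have "{t::real. 0 < t \<and> modular P (\<lambda>x. 0 / of_real t) \<le> 1} = {0<..}"
    using m by auto
  then show "Lp_norm P (\<lambda>x. 0) = 0" unfolding Lp_norm_def by simp
qed

lemma Lp_zero': "(\<And>x. f x = 0) \<Longrightarrow> Lp_mem P f \<and> Lp_norm P f = 0"
proof -
  assume "\<And>x. f x = 0" then have "f = (\<lambda>x. 0)" by auto
  then show ?thesis using Lp_zero(1)[of P] Lp_zero(2)[of P] by simp
qed

lemma Lp_norm_nonneg: "Lp_mem P f \<Longrightarrow> 0 \<le> Lp_norm P f"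
  unfolding Lp_mem_def Lp_norm_def
  by (intro cInf_greatest) auto

lemma modular_up:
  assumes P0: "\<And>x. 0 \<le> P x" and "modular P (\<lambda>x. f x / of_real s) \<le> 1" "0 < s" "s \<le> t"
  shows "modular P (\<lambda>x. f x / of_real t) \<le> 1"
proof -
  have "modular P (\<lambda>x. f x / of_real t) \<le> modular P (\<lambda>x. f x / of_real s)"
    unfolding modular_def
  proof (intro nn_integral_mono ennreal_leI powr_mono2)
    fix x show "0 \<le> P x" by (rule P0)
    show "0 \<le> norm (f x / of_real t)" by simp
    show "norm (f x / of_real t) \<le> norm (f x / of_real s)"
      using assms by (simp add: norm_divide divide_left_mono)
  qed
  then show ?thesis using assms by order
qed

lemma Lp_mono:
  assumes P0: "\<And>x. 0 \<le> P x" and f: "Lp_mem P f" and h: "h \<in> borel_measurable lebesgue"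
    and le: "\<And>x. norm (h x) \<le> norm (f x)"
  shows "Lp_mem P h \<and> Lp_norm P h \<le> Lp_norm P f"
proof -
  have m: "modular P (\<lambda>x. h x / of_real t) \<le> modular P (\<lambda>x. f x / of_real t)" if "0 < t" for t
    unfolding modular_def
  proof (intro nn_integral_mono ennreal_leI powr_mono2)
    fix x show "0 \<le> P x" by (rule P0)
    show "0 \<le> norm (h x / of_real t)" by simp
    show "norm (h x / of_real t) \<le> norm (f x / of_real t)"
      using le[of x] that by (simp add: norm_divide divide_right_mono)
  qed
  have sub: "{t. 0 < t \<and> modular P (\<lambda>x. f x / of_real t) \<le> 1} \<subseteq> {t. 0 < t \<and> modular P (\<lambda>x. h x / of_real t) \<le> 1}"
    using m by (auto intro: order_trans)
  have ne: "{t. 0 < t \<and> modular P (\<lambda>x. f x / of_real t) \<le> 1} \<noteq> {}"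
    using f unfolding Lp_mem_def by auto
  show ?thesis
  proof
    show "Lp_mem P h" using h ne sub unfolding Lp_mem_def by blast
    show "Lp_norm P h \<le> Lp_norm P f" unfolding Lp_norm_def
      by (rule cInf_superset_mono[OF ne _ sub]) (auto intro: bdd_belowI[of _ 0])
  qed
qed

lemma Lp_scale:
  fixes c :: complex
  assumes f: "Lp_mem P f" and c: "c \<noteq> 0"
  shows "Lp_mem P (\<lambda>x. c * f x) \<and> Lp_norm P (\<lambda>x. c * f x) = norm c * Lp_norm P f"
proof -
  define S where "S = {t. 0 < t \<and> modular P (\<lambda>x. f x / of_real t) \<le> 1}"
  have eqm: "modular P (\<lambda>x. c * f x / of_real t) = modular P (\<lambda>x. f x / of_real (t / norm c))" if "t > 0" for t
    unfolding modular_def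
    using c that by (intro nn_integral_cong) (simp add: norm_divide norm_mult field_simps)
  have img: "{t. 0 < t \<and> modular P (\<lambda>x. c * f x / of_real t) \<le> 1} = (\<lambda>s. norm c * s) ` S"
  proof (intro set_eqI iffI)
    fix t assume "t \<in> {t. 0 < t \<and> modular P (\<lambda>x. c * f x / of_real t) \<le> 1}"
    then have "t / norm c \<in> S" "t = norm c * (t / norm c)" using eqm c by (auto simp: S_def)
    then show "t \<in> (\<lambda>s. norm c * s) ` S" by blast
  next
    fix t assume "t \<in> (\<lambda>s. norm c * s) ` S"
    then obtain s where s: "s \<in> S" "t = norm c * s" by auto
    then have "t / norm c = s" using c by auto
    then show "t \<in> {t. 0 < t \<and> modular P (\<lambda>x. c * f x / of_real t) \<le> 1}"
      using s eqm[of t] c by (auto simp: S_def)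
  qed
  have ne: "S \<noteq> {}" using f unfolding Lp_mem_def S_def by auto
  have meas: "(\<lambda>x. c * f x) \<in> borel_measurable lebesgue" using f unfolding Lp_mem_def by auto
  show ?thesis
  proof
    obtain s where "s \<in> S" using ne by auto
    then have "norm c * s \<in> {t. 0 < t \<and> modular P (\<lambda>x. c * f x / of_real t) \<le> 1}"
      using img by auto
    then show "Lp_mem P (\<lambda>x. c * f x)" unfolding Lp_mem_def using meas by blast
    have "norm c * Inf S = Inf ((\<lambda>s. norm c * s) ` S)"
      by (rule continuous_at_Inf_mono[OF _ _ ne]) (auto simp: mono_def mult_left_mono S_def intro!: bdd_belowI[of _ 0] continuous_intros)
    then show "Lp_norm P (\<lambda>x. c * f x) = norm c * Lp_norm P f"
      unfolding Lp_norm_def using img S_def by simp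
  qed
qed




lemma half_powr: fixes b P :: real assumes "1 \<le> P" "0 \<le> b" shows "(b / 2) powr P \<le> b powr P / 2"
proof -
  have "(2::real) powr (1::real) \<le> 2 powr P" using assms by (intro powr_mono) auto
  then have "2 \<le> (2::real) powr P" by simp
  moreover have "(b / 2) powr P = b powr P / 2 powr P" using assms by (simp add: powr_divide)
  moreover have "0 \<le> b powr P" by simp
  ultimately have "b powr P / 2 powr P \<le> b powr P / 2" by (intro divide_left_mono) auto
  then show ?thesis using \<open>(b / 2) powr P = b powr P / 2 powr P\<close> by simp
qed

lemma conv_ineq:
  fixes a b P :: real
  assumes "1 \<le> P" "0 \<le> a" "0 \<le> b"
  shows "((a + b) / 2) powr P \<le> (a powr P + b powr P) / 2"
proof (cases "a = 0 \<or> b = 0")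
  case True
  then show ?thesis using half_powr[OF assms(1) assms(3)] half_powr[OF assms(1) assms(2)] assms
    by auto
next
  case False
  then have "a > 0" "b > 0" using assms by auto
  then have "(\<lambda>x. x powr P) ((1 - 1/2) *\<^sub>R a + (1/2) *\<^sub>R b) \<le> (1 - 1/2) * a powr P + (1/2) * b powr P"
    by (intro convex_onD[OF powr_convex[OF assms(1)]]) auto
  then show ?thesis by (simp add: field_simps)
qed

lemma meas_integrand:
  "f \<in> borel_measurable lebesgue \<Longrightarrow> (P::_\<Rightarrow>real) \<in> borel_measurable lebesgue \<Longrightarrow> (\<lambda>x. ennreal (norm ((f x::complex) / of_real s) powr P x)) \<in> borel_measurable lebesgue"
proof -
  have [measurable]: "(\<lambda>x. complex_of_real s) \<in> borel_measurable lebesgue" by (rule borel_measurable_const)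
  assume [measurable]: "f \<in> borel_measurable lebesgue" "P \<in> borel_measurable lebesgue"
  show ?thesis by measurable
qed

lemma modular_add:
  assumes Pm: "P \<in> borel_measurable lebesgue" and P1: "AE x in lebesgue. 1 \<le> P x"
    and fm: "f \<in> borel_measurable lebesgue" and gm: "g \<in> borel_measurable lebesgue"
    and mf: "modular P (\<lambda>x. f x / of_real s) \<le> 1" and mg: "modular P (\<lambda>x. g x / of_real s) \<le> 1"
    and s: "0 < s"
  shows "modular P (\<lambda>x. (f x + g x) / of_real (2 * s)) \<le> 1"
proof -
  define A where "A x = norm (f x / of_real s) powr P x" for x
  define B where "B x = norm (g x / of_real s) powr P x" for x
  have "modular P (\<lambda>x. (f x + g x) / of_real (2 * s)) \<le> (\<integral>\<^sup>+ x. ennreal (1/2) * (ennreal (A x) + ennreal (B x)) \<partial>lebesgue)"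
    unfolding modular_def
  proof (rule nn_integral_mono_AE)
    show "AE x in lebesgue. ennreal (norm ((f x + g x) / of_real (2 * s)) powr P x) \<le> ennreal (1/2) * (ennreal (A x) + ennreal (B x))"
      using P1
    proof eventually_elim
      case (elim x)
      have "norm ((f x + g x) / of_real (2 * s)) \<le> (norm (f x / of_real s) + norm (g x / of_real s)) / 2"
        using s by (simp add: norm_divide divide_simps norm_triangle_ineq)
      then have "norm ((f x + g x) / of_real (2 * s)) powr P x \<le> ((norm (f x / of_real s) + norm (g x / of_real s)) / 2) powr P x"
        using elim by (intro powr_mono2) auto
      also have "\<dots> \<le> (A x + B x) / 2" unfolding A_def B_def using elim by (intro conv_ineq) auto
      finally have "norm ((f x + g x) / of_real (2 * s)) powr P x \<le> (1/2) * (A x + B x)" by simp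
      then have "ennreal (norm ((f x + g x) / of_real (2 * s)) powr P x) \<le> ennreal ((1/2) * (A x + B x))"
        by (rule ennreal_leI)
      also have "\<dots> = ennreal (1/2) * ennreal (A x + B x)"
        by (rule ennreal_mult) (auto simp: A_def B_def)
      also have "ennreal (A x + B x) = ennreal (A x) + ennreal (B x)"
        by (rule ennreal_plus) (auto simp: A_def B_def)
      finally show ?case .
    qed
  qed
  also have "\<dots> = ennreal (1/2) * ((\<integral>\<^sup>+ x. ennreal (A x) \<partial>lebesgue) + (\<integral>\<^sup>+ x. ennreal (B x) \<partial>lebesgue))"
  proof -
    have [measurable]: "(\<lambda>x. ennreal (A x)) \<in> borel_measurable lebesgue" "(\<lambda>x. ennreal (B x)) \<in> borel_measurable lebesgue"
      unfolding A_def B_def using meas_integrand[OF fm Pm] meas_integrand[OF gm Pm] by auto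
    have "(\<integral>\<^sup>+ x. ennreal (1/2) * (ennreal (A x) + ennreal (B x)) \<partial>lebesgue) = ennreal (1/2) * (\<integral>\<^sup>+ x. (ennreal (A x) + ennreal (B x)) \<partial>lebesgue)"
      by (rule nn_integral_cmult) measurable
    also have "(\<integral>\<^sup>+ x. (ennreal (A x) + ennreal (B x)) \<partial>lebesgue) = (\<integral>\<^sup>+ x. ennreal (A x) \<partial>lebesgue) + (\<integral>\<^sup>+ x. ennreal (B x) \<partial>lebesgue)"
      by (rule nn_integral_add) measurable
    finally show ?thesis .
  qed
  also have "\<dots> \<le> ennreal (1/2) * (1 + 1)"
    using mf mg unfolding modular_def A_def B_def by (intro mult_left_mono add_mono) auto
  also have "\<dots> = 1"
  proof -
    have "ennreal (1/2) * (1 + 1) = ennreal (1/2) * ennreal 2" by (simp add: one_add_one)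
    also have "\<dots> = ennreal (1/2 * 2)" by (rule ennreal_mult[symmetric]) auto
    finally show ?thesis by simp
  qed
  finally show ?thesis .
qed




lemma Lp_in_set:
  assumes P0: "\<And>x. 0 \<le> P x" and f: "Lp_mem P f" and s: "Lp_norm P f < s"
  shows "modular P (\<lambda>x. f x / of_real s) \<le> 1"
proof -
  define S where "S = {t. 0 < t \<and> modular P (\<lambda>x. f x / of_real t) \<le> 1}"
  have ne: "S \<noteq> {}" using f unfolding Lp_mem_def S_def by auto
  have "Inf S < s" using s unfolding Lp_norm_def S_def by simp
  then obtain t where t: "t \<in> S" "t < s" using cInf_lessD[OF ne] by blast
  then show ?thesis using modular_up[OF P0, where f=f and s=t and t=s] unfolding S_def by auto
qed

lemma Lp_add:
  assumes P0: "\<And>x. 0 \<le> P x" and Pm: "P \<in> borel_measurable lebesgue" and P1: "AE x in lebesgue. 1 \<le> P x"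
    and f: "Lp_mem P f" and g: "Lp_mem P g"
  shows "Lp_mem P (\<lambda>x. f x + g x) \<and> Lp_norm P (\<lambda>x. f x + g x) \<le> 2 * max (Lp_norm P f) (Lp_norm P g)"
proof -
  define M where "M = max (Lp_norm P f) (Lp_norm P g)"
  have M0: "0 \<le> M" using Lp_norm_nonneg[OF f] unfolding M_def by auto
  have fm: "f \<in> borel_measurable lebesgue" and gm: "g \<in> borel_measurable lebesgue"
    using f g unfolding Lp_mem_def by auto
  have key: "modular P (\<lambda>x. (f x + g x) / of_real (2 * s)) \<le> 1" if "M < s" for s
  proof (rule modular_add[OF Pm P1 fm gm])
    show "modular P (\<lambda>x. f x / of_real s) \<le> 1" using that by (intro Lp_in_set[OF P0 f]) (auto simp: M_def)
    show "modular P (\<lambda>x. g x / of_real s) \<le> 1" using that by (intro Lp_in_set[OF P0 g]) (auto simp: M_def)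
    show "0 < s" using that M0 by auto
  qed
  have mem: "Lp_mem P (\<lambda>x. f x + g x)"
    unfolding Lp_mem_def using key[of "M+1"] M0 fm gm
    by (intro conjI borel_measurable_add exI[of _ "2 * (M+1)"]) auto
  have "Lp_norm P (\<lambda>x. f x + g x) \<le> 2 * M + e" if "e > 0" for e
  proof -
    have "Lp_norm P (\<lambda>x. f x + g x) \<le> 2 * (M + e/2)"
      unfolding Lp_norm_def
      using key[of "M + e/2"] that M0 by (intro cInf_lower bdd_belowI[of _ 0]) auto
    then show ?thesis by simp
  qed
  then have "Lp_norm P (\<lambda>x. f x + g x) \<le> 2 * M" by (rule field_le_epsilon)
  then show ?thesis using mem unfolding M_def by auto
qed




lemma Lp_indicator:
  assumes P0: "\<And>x. 0 \<le> P x" and f: "Lp_mem P f" and A: "A \<in> sets lebesgue"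
  shows "Lp_mem P (\<lambda>x. indicator A x * f x) \<and> Lp_norm P (\<lambda>x. indicator A x * f x) \<le> Lp_norm P f"
proof (rule Lp_mono[OF P0 f])
  have [measurable]: "f \<in> borel_measurable lebesgue" using f unfolding Lp_mem_def by auto
  show "(\<lambda>x. indicator A x * f x) \<in> borel_measurable lebesgue" using A by measurable
  show "norm (indicator A x * f x) \<le> norm (f x)" for x by (auto simp: indicator_def)
qed

lemma lr_simps:
  "lr_mem (ereal rr) a I \<longleftrightarrow> (\<lambda>k. a k powr rr) summable_on I"
  "lr_norm (ereal rr) a I = (infsum (\<lambda>k. a k powr rr) I) powr (1 / rr)"
  unfolding lr_mem_def lr_norm_def by auto

lemma amal_zero:
  "amalgam_mem P (ereal rr) (\<lambda>x. 0) \<and> amalgam_norm P (ereal rr) (\<lambda>x. 0) = 0"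
  unfolding amalgam_mem_def amalgam_norm_def Lp_loc_def lr_simps
  using Lp_zero[of P] by simp

lemma amal_scale:
  fixes c :: complex
  assumes f: "amalgam_mem P (ereal rr) f" and c: "c \<noteq> 0" and rr: "0 < rr"
  shows "amalgam_mem P (ereal rr) (\<lambda>x. c * f x) \<and> amalgam_norm P (ereal rr) (\<lambda>x. c * f x) = norm c * amalgam_norm P (ereal rr) f"
proof -
  have e: "(\<lambda>x. indicator K x * (c * f x)) = (\<lambda>x. c * (indicator K x * f x))" for K :: "(real^'a) set"
    by (auto simp: fun_eq_iff)
  have cub: "Lp_mem P (\<lambda>x. indicator (cube k) x * f x)" if "k \<in> Zn" for k
    using f that unfolding amalgam_mem_def by auto
  have N: "Lp_norm P (\<lambda>x. indicator (cube k) x * (c * f x)) powr rr = norm c powr rr * Lp_norm P (\<lambda>x. indicator (cube k) x * f x) powr rr"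
    if "k \<in> Zn" for k
    unfolding e using Lp_scale[OF cub[OF that] c] Lp_norm_nonneg[OF cub[OF that]]
    by (simp add: powr_mult)
  have sm: "(\<lambda>k. Lp_norm P (\<lambda>x. indicator (cube k) x * f x) powr rr) summable_on Zn"
    using f unfolding amalgam_mem_def lr_simps by auto
  have sm': "(\<lambda>k. Lp_norm P (\<lambda>x. indicator (cube k) x * (c * f x)) powr rr) summable_on Zn"
    by (subst summable_on_cong[OF N]) (auto intro: summable_on_cmult_right[OF sm])
  have inf: "infsum (\<lambda>k. Lp_norm P (\<lambda>x. indicator (cube k) x * (c * f x)) powr rr) Zn =
      norm c powr rr * infsum (\<lambda>k. Lp_norm P (\<lambda>x. indicator (cube k) x * f x) powr rr) Zn"
    by (subst infsum_cong[OF N]) (auto intro: infsum_cmult_right[OF sm])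
  have nn: "0 \<le> infsum (\<lambda>k. Lp_norm P (\<lambda>x. indicator (cube k) x * f x) powr rr) Zn"
    by (intro infsum_nonneg) auto
  show ?thesis
  proof
    show "amalgam_mem P (ereal rr) (\<lambda>x. c * f x)"
      unfolding amalgam_mem_def lr_simps
    proof (intro conjI ballI)
      show "Lp_loc P (\<lambda>x. c * f x)" using f Lp_scale[OF _ c] unfolding amalgam_mem_def Lp_loc_def e by auto
      show "Lp_mem P (\<lambda>x. indicator (cube k) x * (c * f x))" if "k \<in> Zn" for k
        unfolding e using Lp_scale[OF cub[OF that] c] by auto
    qed (rule sm')
    show "amalgam_norm P (ereal rr) (\<lambda>x. c * f x) = norm c * amalgam_norm P (ereal rr) f"
      unfolding amalgam_norm_def lr_simps inf using rr nn
      by (simp add: powr_mult powr_powr)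
  qed
qed




lemma amal_indicator:
  assumes P0: "\<And>x. 0 \<le> P x" and f: "amalgam_mem P (ereal rr) f" and A: "A \<in> sets lebesgue" and rr: "0 < rr"
  shows "amalgam_mem P (ereal rr) (\<lambda>x. indicator A x * f x) \<and>
         amalgam_norm P (ereal rr) (\<lambda>x. indicator A x * f x) \<le> amalgam_norm P (ereal rr) f"
proof -
  have e: "(\<lambda>x. indicator K x * (indicator A x * f x)) = (\<lambda>x. indicator A x * (indicator K x * f x))" for K :: "(real^'a) set"
    by (auto simp: fun_eq_iff)
  have cub: "Lp_mem P (\<lambda>x. indicator (cube k) x * f x)" if "k \<in> Zn" for k
    using f that unfolding amalgam_mem_def by auto
  note L = Lp_indicator[OF P0 cub A]
  have N: "Lp_norm P (\<lambda>x. indicator (cube k) x * (indicator A x * f x)) powr rr \<le> Lp_norm P (\<lambda>x. indicator (cube k) x * f x) powr rr"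
    if "k \<in> Zn" for k
    unfolding e using L[OF that] Lp_norm_nonneg[OF conjunct1[OF L[OF that]]] rr
    by (intro powr_mono2) auto
  have sm: "(\<lambda>k. Lp_norm P (\<lambda>x. indicator (cube k) x * f x) powr rr) summable_on Zn"
    using f unfolding amalgam_mem_def lr_simps by auto
  have sm': "(\<lambda>k. Lp_norm P (\<lambda>x. indicator (cube k) x * (indicator A x * f x)) powr rr) summable_on Zn"
    by (rule summable_on_comparison_test[OF sm N]) auto
  have inf: "infsum (\<lambda>k. Lp_norm P (\<lambda>x. indicator (cube k) x * (indicator A x * f x)) powr rr) Zn \<le>
      infsum (\<lambda>k. Lp_norm P (\<lambda>x. indicator (cube k) x * f x) powr rr) Zn"
    by (rule infsum_mono[OF sm' sm N])
  have nn: "0 \<le> infsum (\<lambda>k. Lp_norm P (\<lambda>x. indicator (cube k) x * (indicator A x * f x)) powr rr) Zn"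
    by (intro infsum_nonneg) auto
  show ?thesis
  proof
    show "amalgam_mem P (ereal rr) (\<lambda>x. indicator A x * f x)"
      unfolding amalgam_mem_def lr_simps
    proof (intro conjI ballI)
      show "Lp_loc P (\<lambda>x. indicator A x * f x)" using f Lp_indicator[OF P0 _ A] unfolding amalgam_mem_def Lp_loc_def e by auto
      show "Lp_mem P (\<lambda>x. indicator (cube k) x * (indicator A x * f x))" if "k \<in> Zn" for k
        unfolding e using L[OF that] by auto
    qed (rule sm')
    show "amalgam_norm P (ereal rr) (\<lambda>x. indicator A x * f x) \<le> amalgam_norm P (ereal rr) f"
      unfolding amalgam_norm_def lr_simps using inf nn rr
      by (intro powr_mono2) auto
  qed
qed

lemma amal_add:
  assumes P0: "\<And>x. 0 \<le> P x" and Pm: "P \<in> borel_measurable lebesgue" and P1: "AE x in lebesgue. 1 \<le> P x"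
    and f: "amalgam_mem P (ereal rr) f" and g: "amalgam_mem P (ereal rr) g" and rr: "0 < rr"
  shows "amalgam_mem P (ereal rr) (\<lambda>x. f x + g x)"
proof -
  have e: "(\<lambda>x. indicator K x * (f x + g x)) = (\<lambda>x. indicator K x * f x + indicator K x * g x)" for K :: "(real^'a) set"
    by (auto simp: fun_eq_iff algebra_simps)
  have cubf: "Lp_mem P (\<lambda>x. indicator (cube k) x * f x)" if "k \<in> Zn" for k
    using f that unfolding amalgam_mem_def by auto
  have cubg: "Lp_mem P (\<lambda>x. indicator (cube k) x * g x)" if "k \<in> Zn" for k
    using g that unfolding amalgam_mem_def by auto
  note L = Lp_add[OF P0 Pm P1 cubf cubg]
  define a where "a k = Lp_norm P (\<lambda>x. indicator (cube k) x * f x)" for k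
  define b where "b k = Lp_norm P (\<lambda>x. indicator (cube k) x * g x)" for k
  have N: "Lp_norm P (\<lambda>x. indicator (cube k) x * (f x + g x)) powr rr \<le> 2 powr rr * (a k powr rr + b k powr rr)"
    if "k \<in> Zn" for k
  proof -
    have a0: "0 \<le> a k" "0 \<le> b k" unfolding a_def b_def using Lp_norm_nonneg cubf cubg that by auto
    have "Lp_norm P (\<lambda>x. indicator (cube k) x * (f x + g x)) powr rr \<le> (2 * max (a k) (b k)) powr rr"
      unfolding e a_def b_def using L[OF that that] Lp_norm_nonneg[OF conjunct1[OF L[OF that that]]] rr
      by (intro powr_mono2) auto
    also have "\<dots> = 2 powr rr * max (a k) (b k) powr rr" using a0 by (simp add: powr_mult)
    also have "max (a k) (b k) powr rr \<le> a k powr rr + b k powr rr"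
      using a0 by (cases "a k \<le> b k") (auto simp: max_def)
    finally show ?thesis by (simp add: mult_left_mono)
  qed
  have sm: "(\<lambda>k. 2 powr rr * (a k powr rr + b k powr rr)) summable_on Zn"
    using f g unfolding amalgam_mem_def lr_simps a_def b_def
    by (intro summable_on_cmult_right summable_on_add) auto
  show ?thesis
    unfolding amalgam_mem_def lr_simps
  proof (intro conjI ballI)
    show "Lp_loc P (\<lambda>x. f x + g x)" using f g Lp_add[OF P0 Pm P1] unfolding amalgam_mem_def Lp_loc_def e by auto
    show "Lp_mem P (\<lambda>x. indicator (cube k) x * (f x + g x))" if "k \<in> Zn" for k
      unfolding e using L[OF that that] by auto
    show "(\<lambda>k. Lp_norm P (\<lambda>x. indicator (cube k) x * (f x + g x)) powr rr) summable_on Zn"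
      by (rule summable_on_comparison_test[OF sm N]) auto
  qed
qed




definition boxset :: "real \<Rightarrow> real \<Rightarrow> (real^'n::finite) set" where
  "boxset \<rho> R = {y. \<forall>i. - R \<le> \<rho> * y$i \<and> \<rho> * y$i < R}"

lemma boxset_meas: "boxset \<rho> R \<in> sets lebesgue" "- boxset \<rho> R \<in> sets lebesgue"
proof -
  have m: "(\<lambda>y::real^'n. \<rho> * y$i) \<in> borel_measurable lebesgue" for i
    by (intro measurable_completion) (simp add: measurable_lborel1 borel_measurable_continuous_onI continuous_intros)
  have e: "boxset \<rho> R = (\<Inter>i\<in>UNIV. {y::real^'n. (\<lambda>y. \<rho> * y$i) y \<in> {-R..<R}})"
    unfolding boxset_def by auto
  show "boxset \<rho> R \<in> sets lebesgue" unfolding e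
    by (intro sets.finite_INT lebesgue_measurable_vimage_borel[OF m]) auto
  then have "space lebesgue - boxset \<rho> R \<in> sets lebesgue" by auto
  then show "- boxset \<rho> R \<in> sets lebesgue" by (simp add: Compl_eq_Diff_UNIV)
qed

lemma finite_cubes:
  fixes R :: nat
  shows "finite {k \<in> Zn. cube k \<inter> boxset 1 (real R) \<noteq> {}}"
proof -
  let ?S = "(\<lambda>h. \<chi> i. real_of_int (h i)) ` (PiE UNIV (\<lambda>i::'n::finite. {- int R - 1 .. int R}))"
  have "finite ?S" by (intro finite_imageI finite_PiE) auto
  moreover have "{k \<in> Zn. cube k \<inter> boxset 1 (real R) \<noteq> {}} \<subseteq> ?S"
  proof
    fix k :: "real^'n::finite" assume k: "k \<in> {k \<in> Zn. cube k \<inter> boxset 1 (real R) \<noteq> {}}"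
    then obtain y where y: "y \<in> cube k" "y \<in> boxset 1 (real R)" by auto
    have int: "k$i = real_of_int \<lfloor>k$i\<rfloor>" for i using k unfolding Zn_def by auto
    have b: "- int R - 1 \<le> \<lfloor>k$i\<rfloor> \<and> \<lfloor>k$i\<rfloor> \<le> int R" for i
    proof -
      have "k$i \<le> y$i" "y$i < k$i + 1" "- real R \<le> y$i" "y$i < real R"
        using y unfolding cube_def boxset_def by auto
      then have "- real R - 1 < k$i" "k$i < real R" by auto
      then show ?thesis using int[of i] by linarith
    qed
    have "k = (\<chi> i. real_of_int ((\<lambda>i. \<lfloor>k$i\<rfloor>) i))" using int by (simp add: vec_eq_iff)
    moreover have "(\<lambda>i. \<lfloor>k$i\<rfloor>) \<in> PiE UNIV (\<lambda>i::'n. {- int R - 1 .. int R})" using b by auto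
    ultimately show "k \<in> ?S" by (rule image_eqI)
  qed
  ultimately show ?thesis by (rule finite_subset[rotated])
qed

lemma eventually_cube_in_box:
  assumes "0 < \<rho>"
  shows "eventually (\<lambda>R::nat. cube k \<subseteq> boxset \<rho> (real R)) sequentially"
proof -
  define N where "N = nat \<lceil>\<rho> * (norm k + 1)\<rceil> + 1"
  have "cube k \<subseteq> boxset \<rho> (real R)" if "N \<le> R" for R
  proof
    fix y assume y: "y \<in> cube k"
    have RR: "\<rho> * (norm k + 1) < real R" using that unfolding N_def by linarith
    show "y \<in> boxset \<rho> (real R)" unfolding boxset_def
    proof (intro CollectI allI)
      fix i
      have "k$i \<le> y$i" "y$i < k$i + 1" using y unfolding cube_def by auto
      moreover have "\<bar>k$i\<bar> \<le> norm k" by (rule component_le_norm_cart)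
      ultimately have "\<bar>y$i\<bar> \<le> norm k + 1" by linarith
      then have "\<rho> * \<bar>y$i\<bar> \<le> \<rho> * (norm k + 1)" using assms by (intro mult_left_mono) auto
      then have "\<rho> * \<bar>y$i\<bar> < real R" using RR by linarith
      then have "\<bar>\<rho> * y$i\<bar> < real R" using assms by (simp add: abs_mult)
      then show "- real R \<le> \<rho> * y $ i \<and> \<rho> * y $ i < real R" by linarith
    qed
  qed
  then show ?thesis unfolding eventually_sequentially by blast
qed




lemma cube_meas: fixes k :: "real^'n::finite" shows "cube k \<in> sets lebesgue"
proof -
  have m: "(\<lambda>y::real^'n. y$i) \<in> borel_measurable lebesgue" for i
    by (intro measurable_completion) (simp add: measurable_lborel1 borel_measurable_continuous_onI continuous_intros)
  have e: "cube k = (\<Inter>i\<in>UNIV. {y::real^'n. (\<lambda>y. y$i) y \<in> {k$i..<k$i+1}})"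
    unfolding cube_def by auto
  show ?thesis unfolding e
    by (intro sets.finite_INT lebesgue_measurable_vimage_borel[OF m]) auto
qed

lemma compact_meas: "compact K \<Longrightarrow> K \<in> sets lebesgue"
  using lmeasurable_compact fmeasurableD by blast

lemma amal_box:
  fixes f :: "real^'n::finite \<Rightarrow> complex" and R :: nat
  assumes P0: "\<And>x. 0 \<le> P x" and f: "Lp_loc P f" and rr: "0 < rr"
  shows "amalgam_mem P (ereal rr) (\<lambda>x. indicator (boxset 1 (real R)) x * f x)"
proof -
  let ?B = "boxset 1 (real R) :: (real^'n) set"
  define K0 :: "(real^'n) set" where "K0 = cbox (\<chi> i. - real R) (\<chi> i. real R)"
  have BK: "?B \<subseteq> K0" unfolding K0_def boxset_def by (auto simp: mem_box_cart less_imp_le)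
  have K0: "Lp_mem P (\<lambda>x. indicator K0 x * f x)" using f unfolding Lp_loc_def K0_def by auto
  have e: "(\<lambda>x. indicator K x * (indicator ?B x * f x)) = (\<lambda>x. indicator ?B x * (indicator K x * f x))" for K
    by (auto simp: fun_eq_iff)
  have e2: "(\<lambda>x. indicator (cube k) x * (indicator ?B x * f x)) = (\<lambda>x. indicator (cube k \<inter> ?B) x * (indicator K0 x * f x))" for k
    using BK by (auto simp: fun_eq_iff indicator_def)
  have cubmem: "Lp_mem P (\<lambda>x. indicator (cube k) x * (indicator ?B x * f x))" for k
    unfolding e2 by (rule conjunct1[OF Lp_indicator[OF P0 K0 sets.Int[OF cube_meas boxset_meas(1)]]])
  define T where "T = {k \<in> Zn. cube k \<inter> ?B \<noteq> {}}"
  have fin: "finite T" unfolding T_def by (rule finite_cubes)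
  have zero: "Lp_norm P (\<lambda>x. indicator (cube k) x * (indicator ?B x * f x)) powr rr = 0" if "k \<notin> T" "k \<in> Zn" for k
  proof -
    have "indicator (cube k) x * (indicator ?B x * f x) = 0" for x
      using that unfolding T_def by (auto simp: indicator_def)
    then have "Lp_norm P (\<lambda>x. indicator (cube k) x * (indicator ?B x * f x)) = 0"
      using Lp_zero'[of "\<lambda>x. indicator (cube k) x * (indicator ?B x * f x)" P] by blast
    then show ?thesis by simp
  qed
  show ?thesis
    unfolding amalgam_mem_def lr_simps
  proof (intro conjI ballI)
    show "Lp_loc P (\<lambda>x. indicator ?B x * f x)"
      unfolding Lp_loc_def e
    proof (intro allI impI)
      fix K :: "(real^'n) set" assume "compact K"
      then have "Lp_mem P (\<lambda>x. indicator K x * f x)" using f unfolding Lp_loc_def by blast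
      then show "Lp_mem P (\<lambda>x. indicator ?B x * (indicator K x * f x))"
        by (rule conjunct1[OF Lp_indicator[OF P0 _ boxset_meas(1)]])
    qed
    show "Lp_mem P (\<lambda>x. indicator (cube k) x * (indicator ?B x * f x))" for k by (rule cubmem)
    have "(\<lambda>k. Lp_norm P (\<lambda>x. indicator (cube k) x * (indicator ?B x * f x)) powr rr) summable_on T"
      using fin by simp
    then show "(\<lambda>k. Lp_norm P (\<lambda>x. indicator (cube k) x * (indicator ?B x * f x)) powr rr) summable_on Zn"
    proof (subst summable_on_cong_neutral[where T=T and g="\<lambda>k. Lp_norm P (\<lambda>x. indicator (cube k) x * (indicator ?B x * f x)) powr rr"])
      show "\<And>x. x \<in> T - Zn \<Longrightarrow> Lp_norm P (\<lambda>xa. indicator (cube x) xa * (indicator ?B xa * f xa)) powr rr = 0"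
        unfolding T_def by blast
      show "\<And>x. x \<in> Zn - T \<Longrightarrow> Lp_norm P (\<lambda>xa. indicator (cube x) xa * (indicator ?B xa * f xa)) powr rr = 0"
        using zero by blast
    qed auto
  qed
qed




lemma amal_norm_nonneg: "0 \<le> amalgam_norm P (ereal rr) h"
  unfolding amalgam_norm_def lr_simps by simp

lemma amal_tail:
  fixes h :: "real^'n::finite \<Rightarrow> complex"
  assumes P0: "\<And>x. 0 \<le> P x" and h: "amalgam_mem P (ereal rr) h" and rr: "0 < rr" and \<rho>: "0 < \<rho>"
  shows "(\<lambda>R::nat. amalgam_norm P (ereal rr) (\<lambda>y. indicator (- boxset \<rho> (real R)) y * h y)) \<longlonglongrightarrow> 0"
proof (rule tendstoI)
  fix e :: real assume e: "0 < e"
  define Nr where "Nr k = Lp_norm P (\<lambda>x. indicator (cube k) x * h x) powr rr" for k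
  define nr where "nr R k = Lp_norm P (\<lambda>x. indicator (cube k) x * (indicator (- boxset \<rho> (real R)) x * h x)) powr rr" for R :: nat and k
  have sm: "Nr summable_on Zn" using h unfolding amalgam_mem_def lr_simps Nr_def by auto
  have cub: "Lp_mem P (\<lambda>x. indicator (cube k) x * h x)" if "k \<in> Zn" for k
    using h that unfolding amalgam_mem_def by auto
  have ee: "(\<lambda>x. indicator (cube k) x * (indicator A x * h x)) = (\<lambda>x. indicator A x * (indicator (cube k) x * h x))" for k A
    by (auto simp: fun_eq_iff)
  have nrle: "nr R k \<le> Nr k" if "k \<in> Zn" for R k
  proof -
    note L = Lp_indicator[OF P0 cub[OF that] boxset_meas(2)[of \<rho> "real R"]]
    show ?thesis unfolding nr_def Nr_def ee using L Lp_norm_nonneg[OF conjunct1[OF L]] rr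
      by (intro powr_mono2) auto
  qed
  have nr0: "0 \<le> nr R k" for R k unfolding nr_def by simp
  define \<delta> where "\<delta> = e powr rr"
  have \<delta>: "0 < \<delta>" unfolding \<delta>_def using e by simp
  obtain X where X: "finite X" "X \<subseteq> Zn" "dist (sum Nr X) (infsum Nr Zn) \<le> \<delta> / 2"
    using infsum_finite_approximation[OF sm, of "\<delta>/2"] \<delta> by auto
  have ev: "eventually (\<lambda>R::nat. \<forall>k\<in>X. cube k \<subseteq> boxset \<rho> (real R)) sequentially"
    using X(1) eventually_cube_in_box[OF \<rho>] by (intro eventually_ball_finite) auto
  show "eventually (\<lambda>R. dist (amalgam_norm P (ereal rr) (\<lambda>y. indicator (- boxset \<rho> (real R)) y * h y)) 0 < e) sequentially"
    using ev
  proof eventually_elim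
    case (elim R)
    have z: "nr R k = 0" if "k \<in> X" for k
    proof -
      have "indicator (cube k) x * (indicator (- boxset \<rho> (real R)) x * h x) = 0" for x
        using elim that by (auto simp: indicator_def)
      then have "Lp_norm P (\<lambda>x. indicator (cube k) x * (indicator (- boxset \<rho> (real R)) x * h x)) = 0"
        using Lp_zero'[of "\<lambda>x. indicator (cube k) x * (indicator (- boxset \<rho> (real R)) x * h x)" P] by blast
      then show ?thesis unfolding nr_def using rr by simp
    qed
    have smD: "Nr summable_on (Zn - X)" by (rule summable_on_subset[OF sm]) auto
    have smn: "nr R summable_on (Zn - X)"
      by (rule summable_on_comparison_test[OF smD]) (auto intro: nrle nr0)
    have "infsum (nr R) Zn = infsum (nr R) (Zn - X)"
      by (rule infsum_cong_neutral) (auto simp: z)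
    also have "\<dots> \<le> infsum Nr (Zn - X)"
      by (rule infsum_mono[OF smn smD]) (auto intro: nrle)
    also have "infsum Nr Zn = infsum Nr X + infsum Nr (Zn - X)"
    proof -
      have "Zn = X \<union> (Zn - X)" using X by auto
      then have "infsum Nr Zn = infsum Nr (X \<union> (Zn - X))" by simp
      also have "\<dots> = infsum Nr X + infsum Nr (Zn - X)"
        by (rule infsum_Un_disjoint) (use X smD in auto)
      finally show ?thesis .
    qed
    then have "infsum Nr (Zn - X) = infsum Nr Zn - sum Nr X" using X(1) by (simp add: infsum_finite)
    also have "\<dots> < \<delta>" using X(3) \<delta> unfolding dist_real_def abs_le_iff by linarith
    finally have lt: "infsum (nr R) Zn < \<delta>" .
    have nn: "0 \<le> infsum (nr R) Zn" by (intro infsum_nonneg nr0)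
    have "amalgam_norm P (ereal rr) (\<lambda>y. indicator (- boxset \<rho> (real R)) y * h y) = infsum (nr R) Zn powr (1/rr)"
      unfolding amalgam_norm_def lr_simps nr_def by simp
    also have "\<dots> < \<delta> powr (1/rr)" using lt nn rr by (intro powr_less_mono2) auto
    also have "\<dots> = e" unfolding \<delta>_def using e rr by (simp add: powr_powr)
    finally show ?case using amal_norm_nonneg[of P rr] by (simp add: dist_real_def)
  qed
qed




lemma boxset_scale: "0 < r \<Longrightarrow> ((1 / r) *\<^sub>R x \<in> boxset r R) = (x \<in> boxset 1 R)"
  unfolding boxset_def by simp

lemma density_step:
  fixes f :: "real^'n::finite \<Rightarrow> complex" and \<epsilon> :: real
  assumes P0: "\<And>x. 0 \<le> P x" and rr: "0 < rr" and fH: "f \<in> Hsp P (ereal rr) a" and \<epsilon>: "0 < \<epsilon>"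
  shows "\<exists>g. amalgam_mem P (ereal rr) g \<and> (\<lambda>x. f x - g x) \<in> Hsp P (ereal rr) a
            \<and> Hnorm P (ereal rr) a (\<lambda>x. f x - g x) < \<epsilon>"
proof -
  obtain c rad gg where dec: "is_decomp P (ereal rr) a f c rad gg" and floc: "Lp_loc P f"
    using fH unfolding Hsp_def by auto
  have pos: "\<And>j. 0 < rad j" and am: "\<And>j. amalgam_mem P (ereal rr) (gg j)"
    and an: "\<And>j. amalgam_norm P (ereal rr) (gg j) \<le> 1" and smc: "summable (\<lambda>j. norm (c j))"
    and conv: "Lp_loc_conv P f (\<lambda>N x. \<Sum>j<N. c j * dilate a (rad j) (gg j) x)"
    using dec unfolding is_decomp_def by auto
  define C where "C = (\<Sum>j. norm (c j))"
  have C0: "0 \<le> C" unfolding C_def using smc by (intro suminf_nonneg) auto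
  define \<eta> where "\<eta> = \<epsilon> / (2 * (C + 1))"
  have \<eta>: "0 < \<eta>" unfolding \<eta>_def using \<epsilon> C0 by auto
  have \<eta>C: "\<eta> * C < \<epsilon> / 2"
  proof -
    have "\<eta> * C = \<epsilon> / 2 * (C / (C + 1))" unfolding \<eta>_def using C0 by (simp add: field_simps)
    also have "\<dots> < \<epsilon> / 2 * 1" using C0 \<epsilon> by (intro mult_strict_left_mono) auto
    finally show ?thesis by simp
  qed
  define A where "A R j = amalgam_norm P (ereal rr) (\<lambda>y. indicator (- boxset (rad j) (real R)) y * gg j y)" for R :: nat and j
  have AI: "amalgam_mem P (ereal rr) (\<lambda>y. indicator (- boxset (rad j) (real R)) y * gg j y) \<and> A R j \<le> amalgam_norm P (ereal rr) (gg j)" for j R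
    unfolding A_def by (rule amal_indicator[OF P0 am boxset_meas(2) rr])
  have A1: "A R j \<le> 1" for R j using AI[of j R] an[of j] by auto
  have A0: "0 \<le> A R j" for R j unfolding A_def by (rule amal_norm_nonneg)
  have lim: "(\<lambda>R. \<Sum>j. norm (c j) * A R j) \<longlonglongrightarrow> (\<Sum>j. (0::real))"
  proof -
    have "eventually (\<lambda>R. summable (\<lambda>j. norm (norm (c j) * A R j))) sequentially \<and>
           summable (\<lambda>n. norm (0::real)) \<and>
           ((\<lambda>R. suminf (\<lambda>j. norm (c j) * A R j)) \<longlonglongrightarrow> suminf (\<lambda>j. 0::real))"
    proof (rule tannerys_theorem[where M = "\<lambda>j. norm (c j)"])
      show "(\<lambda>R. norm (c k) * A R k) \<longlonglongrightarrow> 0" for k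
        using tendsto_mult_left[OF amal_tail[OF P0 am rr pos, of k], of "norm (c k)"]
        unfolding A_def by simp
      show "\<forall>\<^sub>F (k, R) in at_top \<times>\<^sub>F sequentially. norm (norm (c k) * A R k) \<le> norm (c k)"
        using A0 A1 by (intro always_eventually) (auto intro: mult_left_le)
    qed (use smc in auto)
    then show ?thesis by blast
  qed
  then have "eventually (\<lambda>R. (\<Sum>j. norm (c j) * A R j) < \<epsilon> / 2) sequentially"
    using \<epsilon> by (intro order_tendstoD(2)) auto
  then obtain R where R: "(\<Sum>j. norm (c j) * A R j) < \<epsilon> / 2"
    by (auto simp: eventually_sequentially)
  let ?B = "boxset 1 (real R) :: (real^'n) set"
  define g where "g = (\<lambda>x. indicator ?B x * f x)"
  have gam: "amalgam_mem P (ereal rr) g" unfolding g_def by (rule amal_box[OF P0 floc rr])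
  have fg: "(\<lambda>x. f x - g x) = (\<lambda>x. indicator (- ?B) x * f x)"
    unfolding g_def by (auto simp: fun_eq_iff indicator_def)
  define b where "b j = max (A R j) \<eta>" for j
  have b: "0 < b j" "A R j \<le> b j" "b j \<le> A R j + \<eta>" for j unfolding b_def using \<eta> A0 by auto
  define c' where "c' j = c j * of_real (b j)" for j
  define gg' where "gg' j = (\<lambda>y. of_real (1 / b j) * (indicator (- boxset (rad j) (real R)) y * gg j y))" for j
  have dec': "is_decomp P (ereal rr) a (\<lambda>x. indicator (- ?B) x * f x) c' rad gg'"
    unfolding is_decomp_def
  proof (intro conjI allI)
    fix j
    show "0 < rad j" by (rule pos)
    have ne: "complex_of_real (1 / b j) \<noteq> 0" using b(1)[of j] by simp
    note SC = amal_scale[OF conjunct1[OF AI[of j R]] ne rr]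
    show "amalgam_mem P (ereal rr) (gg' j)" unfolding gg'_def using SC by blast
    have "amalgam_norm P (ereal rr) (gg' j) = (1 / b j) * A R j"
      unfolding gg'_def A_def using SC b(1)[of j] by (simp add: norm_divide)
    also have "\<dots> \<le> 1" using b[of j] by (simp add: divide_simps)
    finally show "amalgam_norm P (ereal rr) (gg' j) \<le> 1" .
  next
    show "summable (\<lambda>j. norm (c' j))"
    proof (rule summable_comparison_test[where g = "\<lambda>j. norm (c j) * (1 + \<eta>)"])
      have bb: "\<bar>b n\<bar> \<le> 1 + \<eta>" for n using b(1)[of n] b(3)[of n] A1[of R n] by simp
      show "\<exists>N. \<forall>n\<ge>N. norm (norm (c' n)) \<le> norm (c n) * (1 + \<eta>)"
        using bb unfolding c'_def by (auto simp: norm_mult intro!: mult_left_mono exI[of _ 0])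
      show "summable (\<lambda>j. norm (c j) * (1 + \<eta>))" using smc by (rule summable_mult2)
    qed
  next
    have tm: "c' j * dilate a (rad j) (gg' j) x = indicator (- ?B) x * (c j * dilate a (rad j) (gg j) x)" for j x
    proof -
      have bb: "complex_of_real (b j) * complex_of_real (1 / b j) = 1" using b(1)[of j] by (simp flip: of_real_mult)
      have ind: "indicator (- boxset (rad j) (real R)) ((1 / rad j) *\<^sub>R x) = (indicator (- ?B) x :: complex)"
        using boxset_scale[OF pos[of j], of x "real R"] by (simp add: indicator_def)
      have "c' j * dilate a (rad j) (gg' j) x = (complex_of_real (b j) * complex_of_real (1 / b j)) * (indicator (- ?B) x * (c j * dilate a (rad j) (gg j) x))"
        unfolding c'_def gg'_def dilate_def ind by (simp only: mult_ac)
      then show ?thesis using bb by simp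
    qed
    have S': "(\<Sum>j<N. c' j * dilate a (rad j) (gg' j) x) = indicator (- ?B) x * (\<Sum>j<N. c j * dilate a (rad j) (gg j) x)" for N x
      unfolding tm by (simp add: sum_distrib_left)
    show "Lp_loc_conv P (\<lambda>x. indicator (- ?B) x * f x) (\<lambda>N x. \<Sum>j<N. c' j * dilate a (rad j) (gg' j) x)"
      unfolding Lp_loc_conv_def
    proof (intro allI impI conjI)
      fix K :: "(real^'n) set" assume K: "compact K"
      define D where "D N = (\<lambda>x. indicator K x * (f x - (\<Sum>j<N. c j * dilate a (rad j) (gg j) x)))" for N
      have Dm: "Lp_mem P (D N)" and Dl: "(\<lambda>N. Lp_norm P (D N)) \<longlonglongrightarrow> 0" for N
        using conv K unfolding Lp_loc_conv_def D_def by auto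
      have e: "(\<lambda>x. indicator K x * (indicator (- ?B) x * f x - (\<Sum>j<N. c' j * dilate a (rad j) (gg' j) x)))
             = (\<lambda>x. indicator (- ?B) x * D N x)" for N
        unfolding S' D_def by (auto simp: fun_eq_iff algebra_simps)
      note L = Lp_indicator[OF P0 Dm boxset_meas(2)]
      show "Lp_mem P (\<lambda>x. indicator K x * (indicator (- ?B) x * f x - (\<Sum>j<N. c' j * dilate a (rad j) (gg' j) x)))" for N
        unfolding e using L by blast
      show "(\<lambda>N. Lp_norm P (\<lambda>x. indicator K x * (indicator (- ?B) x * f x - (\<Sum>j<N. c' j * dilate a (rad j) (gg' j) x)))) \<longlonglongrightarrow> 0"
        unfolding e
      proof (rule tendsto_sandwich[OF _ _ tendsto_const Dl])
        show "\<forall>\<^sub>F N in sequentially. 0 \<le> Lp_norm P (\<lambda>x. indicator (- ?B) x * D N x)"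
          by (intro always_eventually allI Lp_norm_nonneg conjunct1[OF L])
        show "\<forall>\<^sub>F N in sequentially. Lp_norm P (\<lambda>x. indicator (- ?B) x * D N x) \<le> Lp_norm P (D N)"
          by (intro always_eventually allI conjunct2[OF L])
      qed
    qed
  qed
  have loc': "Lp_loc P (\<lambda>x. indicator (- ?B) x * f x)"
  proof -
    have e: "(\<lambda>x. indicator K x * (indicator (- ?B) x * f x)) = (\<lambda>x. indicator (- ?B) x * (indicator K x * f x))" for K
      by (auto simp: fun_eq_iff)
    show ?thesis unfolding Lp_loc_def e
    proof (intro allI impI)
      fix K :: "(real^'n) set" assume "compact K"
      then have "Lp_mem P (\<lambda>x. indicator K x * f x)" using floc unfolding Lp_loc_def by blast
      then show "Lp_mem P (\<lambda>x. indicator (- ?B) x * (indicator K x * f x))"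
        by (rule conjunct1[OF Lp_indicator[OF P0 _ boxset_meas(2)]])
    qed
  qed
  have inH: "(\<lambda>x. f x - g x) \<in> Hsp P (ereal rr) a" unfolding fg Hsp_def using loc' dec' by blast
  have smc': "summable (\<lambda>j. norm (c' j))" using dec' unfolding is_decomp_def by auto
  have "Hnorm P (ereal rr) a (\<lambda>x. f x - g x) \<le> (\<Sum>j. norm (c' j))"
    unfolding Hnorm_def fg
  proof (rule cInf_lower)
    show "(\<Sum>j. norm (c' j)) \<in> {\<Sum>j. norm (c j) |c r g. is_decomp P (ereal rr) a (\<lambda>x. indicator (- ?B) x * f x) c r g}"
      using dec' by blast
    show "bdd_below {\<Sum>j. norm (c j) |c r g. is_decomp P (ereal rr) a (\<lambda>x. indicator (- ?B) x * f x) c r g}"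
      by (rule bdd_belowI[of _ 0]) (auto simp: is_decomp_def intro!: suminf_nonneg)
  qed
  also have "\<dots> \<le> (\<Sum>j. norm (c j) * A R j + norm (c j) * \<eta>)"
  proof (rule suminf_le)
    show "norm (c' j) \<le> norm (c j) * A R j + norm (c j) * \<eta>" for j
      using b[of j] unfolding c'_def by (auto simp: norm_mult distrib_left[symmetric] intro!: mult_left_mono)
    show "summable (\<lambda>j. norm (c' j))" by (rule smc')
    show "summable (\<lambda>j. norm (c j) * A R j + norm (c j) * \<eta>)"
      using smc A0 A1 by (intro summable_add summable_mult2 summable_comparison_test[OF _ smc]) (auto intro!: exI[of _ 0] mult_left_le)
  qed
  also have "\<dots> = (\<Sum>j. norm (c j) * A R j) + \<eta> * C"
  proof -
    have s1: "summable (\<lambda>j. norm (c j) * A R j)"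
      using A0 A1 by (intro summable_comparison_test[OF _ smc]) (auto intro!: exI[of _ 0] mult_left_le)
    have s2: "summable (\<lambda>j. norm (c j) * \<eta>)" using smc by (rule summable_mult2)
    show ?thesis unfolding C_def using suminf_add[OF s1 s2] suminf_mult2[OF smc, of \<eta>]
      by (simp add: mult.commute)
  qed
  also have "\<dots> < \<epsilon>" using R \<eta>C by linarith
  finally show ?thesis using gam inH by blast
qed




lemma hsp_of_amal:
  fixes f :: "real^'n::finite \<Rightarrow> complex"
  assumes P0: "\<And>x. 0 \<le> P x" and rr: "0 < rr" and f: "amalgam_mem P (ereal rr) f"
  shows "f \<in> Hsp P (ereal rr) a"
proof -
  have floc: "Lp_loc P f" using f unfolding amalgam_mem_def by auto
  define t where "t = amalgam_norm P (ereal rr) f + 1"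
  have t: "0 < t" unfolding t_def using amal_norm_nonneg[of P rr f] by linarith
  define c :: "nat \<Rightarrow> complex" where "c j = (if j = 0 then of_real t else 0)" for j
  define g :: "nat \<Rightarrow> real^'n \<Rightarrow> complex" where "g j = (if j = 0 then (\<lambda>x. of_real (1 / t) * f x) else (\<lambda>x. 0))" for j
  have ne: "complex_of_real (1 / t) \<noteq> 0" using t by simp
  note SC = amal_scale[OF f ne rr]
  have S: "(\<Sum>j<N. c j * dilate a ((\<lambda>_. 1) j) (g j) x) = (if N = 0 then 0 else f x)" for N x
  proof -
    have tt: "complex_of_real t * complex_of_real (1/t) = 1" using t by (simp flip: of_real_mult)
    have "c j * dilate a ((\<lambda>_. 1) j) (g j) x = (if j = 0 then f x else 0)" for j
      unfolding c_def g_def by (cases "j = 0") (simp_all add: dilate_def mult.assoc[symmetric] tt del: of_real_divide)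
    then show ?thesis by (simp add: sum.delta' lessThan_def)
  qed
  have dec: "is_decomp P (ereal rr) a f c (\<lambda>_. 1) g"
    unfolding is_decomp_def
  proof (intro conjI allI)
    fix j
    show "0 < (1::real)" by simp
    show "amalgam_mem P (ereal rr) (g j)" unfolding g_def using SC amal_zero by auto
    show "amalgam_norm P (ereal rr) (g j) \<le> 1"
    proof (cases "j = 0")
      case True
      have "amalgam_norm P (ereal rr) (g j) = (1 / t) * amalgam_norm P (ereal rr) f"
        using SC True t unfolding g_def by (simp add: norm_divide)
      also have "\<dots> \<le> 1" using t unfolding t_def by (simp add: divide_simps)
      finally show ?thesis .
    qed (simp add: g_def amal_zero)
  next
    show "summable (\<lambda>j. norm (c j))"
      by (rule summable_finite[of "{0}"]) (auto simp: c_def)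
  next
    show "Lp_loc_conv P f (\<lambda>N x. \<Sum>j<N. c j * dilate a ((\<lambda>_. 1) j) (g j) x)"
      unfolding Lp_loc_conv_def S
    proof (intro allI impI conjI)
      fix K :: "(real^'n) set" and N :: nat assume K: "compact K"
      show "Lp_mem P (\<lambda>x. indicator K x * (f x - (if N = 0 then 0 else f x)))"
      proof (cases "N = 0")
        case True then show ?thesis using floc K unfolding Lp_loc_def by simp
      next
        case False then show ?thesis using Lp_zero'[of "\<lambda>x. indicator K x * (f x - (if N = 0 then 0 else f x))" P] by simp
      qed
    next
      fix K :: "(real^'n) set" assume K: "compact K"
      have "eventually (\<lambda>N. Lp_norm P (\<lambda>x. indicator K x * (f x - (if N = 0 then 0 else f x))) = 0) sequentially"
        unfolding eventually_sequentially
        by (rule exI[of _ 1]) (auto simp: Lp_zero(2))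
      then show "(\<lambda>N. Lp_norm P (\<lambda>x. indicator K x * (f x - (if N = 0 then 0 else f x)))) \<longlonglongrightarrow> 0"
        by (rule tendsto_eventually)
    qed
  qed
  show ?thesis unfolding Hsp_def using floc dec by blast
qed

lemma no_AE_False: "\<not> (AE x in (lebesgue :: (real^'n::finite) measure). False)"
proof
  assume "AE x in (lebesgue :: (real^'n::finite) measure). False"
  then have "AE x in (lborel :: (real^'n::finite) measure). False" by (simp add: AE_completion_iff)
  then obtain N where N: "{x \<in> space lborel. \<not> False} \<subseteq> N" "emeasure (lborel :: (real^'n::finite) measure) N = 0"
    by (rule AE_E)
  then have "N = UNIV" by auto
  then show False using N(2) emeasure_lborel_UNIV by auto
qed




theorem proposition3p3:
  fixes p :: "real^'n::finite \<Rightarrow> real" and q \<alpha> :: ereal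
  assumes "var_exp_class p" and "1 \<le> q" and "1 \<le> \<alpha>"
    and "\<forall>x. ereal (p x) \<le> \<alpha>" and "\<alpha> \<le> q"
  shows "{f. amalgam_mem (conj_exp p) (econj q) f} \<subseteq> Hsp (conj_exp p) (econj q) (econj \<alpha>)
     \<and> amalgam_mem (conj_exp p) (econj q) (\<lambda>x. 0)
     \<and> (\<forall>f g. amalgam_mem (conj_exp p) (econj q) f \<longrightarrow> amalgam_mem (conj_exp p) (econj q) g
            \<longrightarrow> amalgam_mem (conj_exp p) (econj q) (\<lambda>x. f x + g x))
     \<and> (\<forall>f (c::complex). amalgam_mem (conj_exp p) (econj q) f
            \<longrightarrow> amalgam_mem (conj_exp p) (econj q) (\<lambda>x. c * f x))
     \<and> (\<forall>f \<in> Hsp (conj_exp p) (econj q) (econj \<alpha>). \<forall>\<epsilon>>0. \<exists>g.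
            amalgam_mem (conj_exp p) (econj q) g
            \<and> (\<lambda>x. f x - g x) \<in> Hsp (conj_exp p) (econj q) (econj \<alpha>)
            \<and> Hnorm (conj_exp p) (econj q) (econj \<alpha>) (\<lambda>x. f x - g x) < \<epsilon>)"
proof -
  define P where "P = conj_exp p"
  have pm: "p \<in> borel_measurable lebesgue" and p1: "\<And>x. 1 \<le> p x"
    and pc: "\<exists>c>1. AE x in lebesgue. c \<le> p x"
    using assms(1) unfolding var_exp_class_def by auto
  have P0: "0 \<le> P x" for x
  proof -
    have "1 \<le> p x" by (rule p1)
    then show ?thesis unfolding P_def conj_exp_def by (intro divide_nonneg_nonneg) linarith+
  qed
  have Pm: "P \<in> borel_measurable lebesgue" unfolding P_def conj_exp_def using pm by measurable
  obtain c0 where c0: "c0 > 1" "AE x in lebesgue. c0 \<le> p x" using pc by auto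
  have P1: "AE x in lebesgue. 1 \<le> P x"
    using c0(2)
  proof eventually_elim
    case (elim x)
    then have "p x - 1 > 0" using c0(1) by linarith
    then show ?case unfolding P_def conj_exp_def by (simp add: le_divide_eq)
  qed
  have q1: "q \<noteq> 1"
  proof
    assume "q = 1"
    then have "\<alpha> = 1" using assms(3,5) by auto
    then have le: "p x \<le> 1" for x using assms(4) by (metis ereal_less_eq(3) one_ereal_def)
    have "AE x in (lebesgue :: (real^'n) measure). False"
    proof (rule eventually_mono[OF c0(2), where Q="\<lambda>_. False"])
      fix x assume "c0 \<le> p x" then show False using le[of x] c0(1) by linarith
    qed
    then show False using no_AE_False by blast
  qed
  obtain rr where rr: "econj q = ereal rr" "0 < rr"
  proof (cases q)
    case (real q0)
    then have "q0 > 1" using assms(2) q1 by auto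
    then show ?thesis using that[of "q0 / (q0 - 1)"] real by (auto simp: econj_def)
  next
    case PInf then show ?thesis using that[of 1] by (auto simp: econj_def)
  next
    case MInf then show ?thesis using assms(2) by auto
  qed
  show ?thesis
    unfolding P_def[symmetric] rr(1)
  proof (intro conjI allI impI ballI subsetI)
    show "f \<in> Hsp P (ereal rr) (econj \<alpha>)" if "f \<in> {f. amalgam_mem P (ereal rr) f}" for f
      using hsp_of_amal[OF P0 rr(2)] that by auto
    show "amalgam_mem P (ereal rr) (\<lambda>x. 0)" using amal_zero by blast
    show "amalgam_mem P (ereal rr) (\<lambda>x. f x + g x)" if "amalgam_mem P (ereal rr) f" "amalgam_mem P (ereal rr) g" for f g
      by (rule amal_add[OF P0 Pm P1 that rr(2)])
    show "amalgam_mem P (ereal rr) (\<lambda>x. c * f x)" if "amalgam_mem P (ereal rr) f" for f and c :: complex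
    proof (cases "c = 0")
      case True then show ?thesis using amal_zero[of P rr] by simp
    next
      case False then show ?thesis using amal_scale[OF that False rr(2)] by blast
    qed
    show "\<exists>g. amalgam_mem P (ereal rr) g \<and> (\<lambda>x. f x - g x) \<in> Hsp P (ereal rr) (econj \<alpha>) \<and> Hnorm P (ereal rr) (econj \<alpha>) (\<lambda>x. f x - g x) < \<epsilon>"
      if "f \<in> Hsp P (ereal rr) (econj \<alpha>)" "0 < \<epsilon>" for f \<epsilon>
      by (rule density_step[OF P0 rr(2) that])
  qed
qed


end
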